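(* Let $A_{12}\in\mathbb{R}_{\ge 0}^{m\times n}$ with $\mathrm{rank}(A_{12})=m$, and let $A_{22}=[a_{ij}]\in\mathbb{R}^{n\times n}$ satisfy: $a_{ij}\ge 0$ for $i\neq j$, $a_{ii}\le 0$; the directed graph on $\{1,\dots,n\}$ with an edge $j\to i$ whenever $i\ne j$ and $a_{ij}>0$ is weakly connected; and, with $s_i=\sum_{j\neq i}(a_{ij}+a_{ji})$, one has $s_i\le 2|a_{ii}|$ for all $i$ and $s_j<2|a_{jj}|$ for at least one $j$. Let $Q\in\mathfrak{C}_{n,k}$ satisfy $\mathrm{rank}(A_{12}Q)=k$. For $\phi\in\mathbb{R}$ define $R_\phi=Q^+A_{22}\big(I_n-(I_n-\phi QQ^+)A_{12}^{\dagger}A_{12}\big)$ and $M_\phi=R_\phi Q$. Then there exists $\psi\in\mathbb{R}$ such that $M_\phi$ is Hurwitz for every $\phi>\psi$.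
   Context: $\mathfrak{C}_{n,k}=\{X\in\{0,1\}^{n\times k}: X\mathbf{1}_k=\mathbf{1}_n\}$, with every column of $Q$ nonzero; $Q^+=(Q^\top Q)^{-1}Q^\top$. $A_{12}^{\dagger}=A_{12}^\top(A_{12}A_{12}^\top)^{-1}$ is the Moore–Penrose pseudo-inverse of the full-row-rank matrix $A_{12}$. (Equivalently, $R_\phi=Q^+A_{22}-LA_{12}$ with $L=(Q^+A_{22}-\phi\,Q^+A_{22}QQ^+)A_{12}^\dagger$.) A matrix is Hurwitz if all its eigenvalues have negative real part. *)

theory Defs
  imports "HOL-Analysis.Analysis"
begin

definition hurwitz :: "real^'k^'k \<Rightarrow> bool" where
  "hurwitz M \<longleftrightarrow> (\<forall>(lam::complex) (v::complex^'k).
      v \<noteq> 0 \<and> map_matrix complex_of_real M *v v = lam *s v \<longrightarrow> Re lam < 0)"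

definition clustering_matrix :: "real^'k^'n \<Rightarrow> bool" where
  "clustering_matrix Q \<longleftrightarrow> (\<forall>i j. Q $ i $ j = 0 \<or> Q $ i $ j = 1)
     \<and> (\<forall>i. (\<Sum>j\<in>UNIV. Q $ i $ j) = 1)
     \<and> (\<forall>j. \<exists>i. Q $ i $ j \<noteq> 0)"

definition left_pinv :: "real^'k^'n \<Rightarrow> real^'n^'k" where
  "left_pinv Q = matrix_inv (transpose Q ** Q) ** transpose Q"

text \<open>Moore-Penrose pseudo-inverse of a full-row-rank matrix: A^T (A A^T)^{-1}.\<close>
definition right_pinv :: "real^'n^'m \<Rightarrow> real^'m^'n" where
  "right_pinv A = transpose A ** matrix_inv (A ** transpose A)"

definition weakly_connected_graph :: "real^'n^'n \<Rightarrow> bool" where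
  "weakly_connected_graph A \<longleftrightarrow>
     (\<forall>x y. (x, y) \<in> {(u, v). u \<noteq> v \<and> (A $ u $ v > 0 \<or> A $ v $ u > 0)}\<^sup>*)"

definition R_mat :: "real^'n^'m \<Rightarrow> real^'n^'n \<Rightarrow> real^'k^'n \<Rightarrow> real \<Rightarrow> real^'n^'k" where
  "R_mat A12 A22 Q \<phi> = left_pinv Q ** A22 **
     (mat 1 - (mat 1 - \<phi> *\<^sub>R (Q ** left_pinv Q)) ** right_pinv A12 ** A12)"

definition M_mat :: "real^'n^'m \<Rightarrow> real^'n^'n \<Rightarrow> real^'k^'n \<Rightarrow> real \<Rightarrow> real^'k^'k" where
  "M_mat A12 A22 Q \<phi> = R_mat A12 A22 Q \<phi> ** Q"

end

theory Submission
  imports Defs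
begin

lemma quad_identity:
  fixes A :: "real^'n^'n" and z :: "real^'n"
  shows "z \<bullet> (A *v z) = (\<Sum>i\<in>UNIV. (z$i)^2 * ((\<Sum>j\<in>UNIV. A$i$j + A$j$i) / 2))
           - (\<Sum>i\<in>UNIV. \<Sum>j\<in>UNIV. A$i$j * (z$i - z$j)^2) / 2"
proof -
  have "z \<bullet> (A *v z) = (\<Sum>i\<in>UNIV. \<Sum>j\<in>UNIV. A$i$j * z$i * z$j)"
    by (simp add: inner_vec_def matrix_vector_mult_def sum_distrib_left mult_ac)
  also have "\<dots> = (\<Sum>i\<in>UNIV. \<Sum>j\<in>UNIV. A$i$j * (z$i)^2 / 2 + A$i$j * (z$j)^2 / 2
        - A$i$j * (z$i - z$j)^2 / 2)"
    by (intro sum.cong refl) (simp add: power2_eq_square field_simps)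
  also have "\<dots> = (\<Sum>i\<in>UNIV. \<Sum>j\<in>UNIV. A$i$j * (z$i)^2 / 2) + (\<Sum>i\<in>UNIV. \<Sum>j\<in>UNIV. A$i$j * (z$j)^2 / 2)
        - (\<Sum>i\<in>UNIV. \<Sum>j\<in>UNIV. A$i$j * (z$i - z$j)^2) / 2"
    by (simp add: sum.distrib sum_subtractf sum_divide_distrib)
  also have "(\<Sum>i\<in>UNIV. \<Sum>j\<in>UNIV. A$i$j * (z$j)^2 / 2) = (\<Sum>i\<in>UNIV. \<Sum>j\<in>UNIV. A$j$i * (z$i)^2 / 2)"
    by (rule sum.swap)
  finally have X: "z \<bullet> (A *v z) = (\<Sum>i\<in>UNIV. \<Sum>j\<in>UNIV. A$i$j * (z$i)^2 / 2) + (\<Sum>i\<in>UNIV. \<Sum>j\<in>UNIV. A$j$i * (z$i)^2 / 2)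
        - (\<Sum>i\<in>UNIV. \<Sum>j\<in>UNIV. A$i$j * (z$i - z$j)^2) / 2" .
  have Y: "(z$i)^2 * ((\<Sum>j\<in>UNIV. A$i$j + A$j$i) / 2) = (\<Sum>j\<in>UNIV. A$i$j * (z$i)^2 / 2) + (\<Sum>j\<in>UNIV. A$j$i * (z$i)^2 / 2)" for i
    by (simp add: sum.distrib[symmetric] sum_distrib_left sum_divide_distrib algebra_simps add_divide_distrib)
  show ?thesis unfolding X Y by (simp add: sum.distrib)
qed

lemma quad_neg:
  fixes A :: "real^'n^'n" and z :: "real^'n"
  assumes off: "\<forall>i j. i \<noteq> j \<longrightarrow> A $ i $ j \<ge> 0"
    and diag: "\<forall>i. A $ i $ i \<le> 0"
    and conn: "weakly_connected_graph A"
    and dom: "\<forall>i. (\<Sum>j\<in>UNIV - {i}. A $ i $ j + A $ j $ i) \<le> 2 * \<bar>A $ i $ i\<bar>"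
    and strict: "\<exists>j. (\<Sum>i\<in>UNIV - {j}. A $ j $ i + A $ i $ j) < 2 * \<bar>A $ j $ j\<bar>"
    and z: "z \<noteq> 0"
  shows "z \<bullet> (A *v z) < 0"
proof -
  define c where "c i = (\<Sum>j\<in>UNIV. A$i$j + A$j$i) / 2" for i
  have sd: "(\<Sum>j\<in>UNIV - {i}. A $ i $ j + A $ j $ i) = 2 * c i - 2 * A$i$i" for i
    by (simp add: sum_diff1 c_def)
  have c_le: "c i \<le> 0" for i
    using dom[rule_format, of i] diag[rule_format, of i] sd[of i] by auto
  have T1: "(\<Sum>i\<in>UNIV. (z$i)^2 * c i) \<le> 0"
    by (rule sum_nonpos) (simp add: c_le mult_nonneg_nonpos)
  have t2: "A$i$j * (z$i - z$j)^2 \<ge> 0" for i j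
    using off by (cases "i = j") auto
  have T2: "(\<Sum>i\<in>UNIV. \<Sum>j\<in>UNIV. A$i$j * (z$i - z$j)^2) \<ge> 0"
    by (intro sum_nonneg) (rule t2)
  have qi: "z \<bullet> (A *v z) = (\<Sum>i\<in>UNIV. (z$i)^2 * c i) - (\<Sum>i\<in>UNIV. \<Sum>j\<in>UNIV. A$i$j * (z$i - z$j)^2) / 2"
    unfolding c_def by (rule quad_identity)
  have le: "z \<bullet> (A *v z) \<le> 0" using qi T1 T2 by linarith
  show ?thesis
  proof (rule ccontr)
    assume "\<not> ?thesis"
    with le have eq0: "z \<bullet> (A *v z) = 0" by linarith
    with qi T1 T2 have e1: "(\<Sum>i\<in>UNIV. (z$i)^2 * c i) = 0"
      and e2: "(\<Sum>i\<in>UNIV. \<Sum>j\<in>UNIV. A$i$j * (z$i - z$j)^2) = 0" by linarith+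
    have e1i: "(z$i)^2 * c i = 0" for i
    proof -
      have "(\<Sum>i\<in>UNIV. - ((z$i)^2 * c i)) = 0" using e1 by (simp add: sum_negf)
      moreover have "\<forall>i\<in>UNIV. 0 \<le> - ((z$i)^2 * c i)" by (simp add: c_le mult_nonneg_nonpos)
      ultimately show ?thesis using sum_nonneg_eq_0_iff[of UNIV "\<lambda>i. - ((z$i)^2 * c i)"] by simp
    qed
    have e2i: "A$i$j * (z$i - z$j)^2 = 0" for i j
    proof -
      have "(\<Sum>j\<in>UNIV. A$i$j * (z$i - z$j)^2) = 0"
        using e2 sum_nonneg_eq_0_iff[of UNIV "\<lambda>i. \<Sum>j\<in>UNIV. A$i$j * (z$i - z$j)^2"] T2
        by (simp add: sum_nonneg t2)
      then show ?thesis using sum_nonneg_eq_0_iff[of UNIV "\<lambda>j. A$i$j * (z$i - z$j)^2"] t2 by simp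
    qed
    have edge: "z$u = z$v" if "A$u$v > 0" for u v
      using e2i[of u v] that by simp
    have path: "z$x = z$y" for x y
    proof -
      have "(x, y) \<in> {(u, v). u \<noteq> v \<and> (A $ u $ v > 0 \<or> A $ v $ u > 0)}\<^sup>*"
        using conn unfolding weakly_connected_graph_def by blast
      then show ?thesis
      proof (induction rule: rtrancl_induct)
        case base then show ?case by simp
      next
        case (step y w) then show ?case using edge[of y w] edge[of w y] by auto
      qed
    qed
    obtain j where j: "(\<Sum>i\<in>UNIV - {j}. A $ j $ i + A $ i $ j) < 2 * \<bar>A $ j $ j\<bar>" using strict by blast
    have "c j < 0" using j sd[of j] diag[rule_format, of j] by auto
    then have "z$j = 0" using e1i[of j] by simp
    then have "z = 0" using path by (metis vec_eq_iff zero_index)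
    with z show False by simp
  qed
qed

lemma inv_props:
  fixes A :: "real^'n^'n"
  assumes "invertible A"
  shows "A ** matrix_inv A = mat 1" "matrix_inv A ** A = mat 1"
proof -
  have "\<exists>A'. A ** A' = mat 1 \<and> A' ** A = mat 1" using assms unfolding invertible_def by blast
  then have "A ** matrix_inv A = mat 1 \<and> matrix_inv A ** A = mat 1"
    unfolding matrix_inv_def by (rule someI_ex)
  then show "A ** matrix_inv A = mat 1" "matrix_inv A ** A = mat 1" by auto
qed

lemma adj: "(x::real^'m) \<bullet> ((A::real^'n^'m) *v y) = (transpose A *v x) \<bullet> y"
  by (simp add: dot_lmul_matrix)

lemma gram_inv:
  fixes B :: "real^'a^'b"
  assumes "inj ((*v) B)"
  shows "invertible (transpose B ** B)"
proof -
  have "\<forall>x. (transpose B ** B) *v x = 0 \<longrightarrow> x = 0"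
  proof (intro allI impI)
    fix x assume "(transpose B ** B) *v x = 0"
    then have "x \<bullet> ((transpose B ** B) *v x) = 0" by simp
    then have "(B *v x) \<bullet> (B *v x) = 0"
      by (simp only: matrix_vector_mul_assoc[symmetric] adj transpose_transpose)
    then have "B *v x = B *v 0" by simp
    then show "x = 0" using assms by (meson injD)
  qed
  then show ?thesis
    using matrix_left_invertible_ker invertible_left_inverse by blast
qed

lemma sym_inv:
  fixes A :: "real^'n^'n"
  assumes "transpose A = A" "invertible A"
  shows "transpose (matrix_inv A) = matrix_inv A"
proof -
  have "transpose (matrix_inv A) ** A = mat 1"
    by (metis assms inv_props(1) matrix_transpose_mul transpose_mat)
  then have "transpose (matrix_inv A) = transpose (matrix_inv A) ** (A ** matrix_inv A)"
    by (simp add: inv_props(1)[OF assms(2)])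
  also have "\<dots> = matrix_inv A"
    by (simp add: matrix_mul_assoc \<open>transpose (matrix_inv A) ** A = mat 1\<close>)
  finally show ?thesis .
qed

lemma lyap_eig:
  fixes M S :: "real^'k^'k"
  assumes symS: "transpose S = S"
    and posS: "\<And>x. x \<noteq> 0 \<Longrightarrow> x \<bullet> (S *v x) > 0"
    and negM: "\<And>x. x \<noteq> 0 \<Longrightarrow> x \<bullet> (S *v (M *v x)) < 0"
  shows "hurwitz M"
  unfolding hurwitz_def
proof (intro allI impI, elim conjE)
  fix lam :: complex and v :: "complex^'k"
  assume v0: "v \<noteq> 0" and ev: "map_matrix complex_of_real M *v v = lam *s v"
  define x where "x = (\<chi> i. Re (v$i))"
  define y where "y = (\<chi> i. Im (v$i))"
  define a where "a = Re lam"
  define b where "b = Im lam"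
  have comp: "(\<Sum>j\<in>UNIV. complex_of_real (M$i$j) * v$j) = lam * v$i" for i
    using arg_cong[OF ev, of "\<lambda>w. w$i"] by (simp add: matrix_vector_mult_def)
  have Mx: "M *v x = a *\<^sub>R x - b *\<^sub>R y"
  proof -
    have "Re (\<Sum>j\<in>UNIV. complex_of_real (M$i$j) * v$j) = Re (lam * v$i)" for i using comp by simp
    then show ?thesis
      by (simp add: vec_eq_iff matrix_vector_mult_def x_def y_def a_def b_def Re_sum)
  qed
  have My: "M *v y = b *\<^sub>R x + a *\<^sub>R y"
  proof -
    have "Im (\<Sum>j\<in>UNIV. complex_of_real (M$i$j) * v$j) = Im (lam * v$i)" for i using comp by simp
    then show ?thesis
      by (simp add: vec_eq_iff matrix_vector_mult_def x_def y_def a_def b_def Im_sum algebra_simps)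
  qed
  have xy0: "x \<noteq> 0 \<or> y \<noteq> 0"
  proof (rule ccontr)
    assume "\<not> ?thesis"
    then have "\<forall>i. Re (v$i) = 0 \<and> Im (v$i) = 0"
      by (simp add: x_def y_def vec_eq_iff)
    then have "v = 0" by (simp add: vec_eq_iff complex_eq_iff)
    with v0 show False by simp
  qed
  have le1: "x \<bullet> (S *v (M *v x)) \<le> 0" using negM[of x] by (cases "x = 0") auto
  have le2: "y \<bullet> (S *v (M *v y)) \<le> 0" using negM[of y] by (cases "y = 0") auto
  have sum_neg: "x \<bullet> (S *v (M *v x)) + y \<bullet> (S *v (M *v y)) < 0"
    using xy0 negM[of x] negM[of y] le1 le2 by auto
  have ge1: "x \<bullet> (S *v x) \<ge> 0" using posS[of x] by (cases "x = 0") auto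
  have ge2: "y \<bullet> (S *v y) \<ge> 0" using posS[of y] by (cases "y = 0") auto
  have pos: "x \<bullet> (S *v x) + y \<bullet> (S *v y) > 0"
    using xy0 posS[of x] posS[of y] ge1 ge2 by auto
  have symxy: "x \<bullet> (S *v y) = y \<bullet> (S *v x)"
    by (metis adj inner_commute symS)
  have "x \<bullet> (S *v (M *v x)) + y \<bullet> (S *v (M *v y)) = a * (x \<bullet> (S *v x) + y \<bullet> (S *v y))"
    unfolding Mx My by (simp add: algebra_simps symxy)
  with sum_neg pos have "a * (x \<bullet> (S *v x) + y \<bullet> (S *v y)) < 0" by simp
  with pos show "Re lam < 0" unfolding a_def by (simp add: mult_less_0_iff)
qed

lemma quad_bound:
  fixes F E :: "real^'k^'k"
  assumes negF: "\<And>x. x \<noteq> 0 \<Longrightarrow> x \<bullet> (F *v x) < 0"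
  shows "\<exists>\<psi>. \<forall>\<phi>>\<psi>. \<forall>x. x \<noteq> 0 \<longrightarrow> \<phi> * (x \<bullet> (F *v x)) + x \<bullet> (E *v x) < 0"
proof -
  have cF: "continuous_on (sphere 0 1) (\<lambda>x. x \<bullet> (F *v x))"
    by (intro continuous_intros linear_continuous_on matrix_vector_mul_bounded_linear)
  have cE: "continuous_on (sphere 0 1) (\<lambda>x. x \<bullet> (E *v x))"
    by (intro continuous_intros linear_continuous_on matrix_vector_mul_bounded_linear)
  have ne: "sphere (0::real^'k) 1 \<noteq> {}"
  proof -
    have "norm (axis undefined 1 :: real^'k) = 1" by simp
    then have "axis undefined 1 \<in> sphere (0::real^'k) 1" by (simp add: sphere_def dist_norm)
    then show ?thesis by blast
  qed
  obtain u where u: "u \<in> sphere 0 1" and umax: "\<forall>y\<in>sphere 0 1. y \<bullet> (F *v y) \<le> u \<bullet> (F *v u)"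
    using continuous_attains_sup[OF compact_sphere ne cF] by blast
  obtain w where w: "w \<in> sphere 0 1" and wmax: "\<forall>y\<in>sphere 0 1. y \<bullet> (E *v y) \<le> w \<bullet> (E *v w)"
    using continuous_attains_sup[OF compact_sphere ne cE] by blast
  define c where "c = - (u \<bullet> (F *v u))"
  define K where "K = w \<bullet> (E *v w)"
  have "u \<noteq> 0" using u by auto
  then have c0: "c > 0" using negF[of u] by (simp add: c_def)
  show ?thesis
  proof (intro exI allI impI)
    fix \<phi> :: real and x :: "real^'k"
    assume ph: "\<phi> > max 0 (K / c)" and x0: "x \<noteq> 0"
    define n where "n = norm x"
    have n0: "n > 0" using x0 by (simp add: n_def)
    define y where "y = (1 / n) *\<^sub>R x"
    have ys: "y \<in> sphere 0 1" using n0 by (simp add: y_def n_def)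
    have xy: "x = n *\<^sub>R y" using n0 by (simp add: y_def)
    have "\<phi> * (y \<bullet> (F *v y)) \<le> \<phi> * (- c)"
      using umax ys ph by (intro mult_left_mono) (auto simp: c_def)
    moreover have "y \<bullet> (E *v y) \<le> K" using wmax ys by (simp add: K_def)
    moreover have "\<phi> * c > K" using ph c0 by (auto simp: field_simps)
    ultimately have neg: "\<phi> * (y \<bullet> (F *v y)) + y \<bullet> (E *v y) < 0" by linarith
    have "\<phi> * (x \<bullet> (F *v x)) + x \<bullet> (E *v x) = n^2 * (\<phi> * (y \<bullet> (F *v y)) + y \<bullet> (E *v y))"
      unfolding xy by (simp add: matrix_vector_mult_scaleR power2_eq_square algebra_simps)
    also have "\<dots> < 0" using neg n0 by (simp add: mult_pos_neg)
    finally show "\<phi> * (x \<bullet> (F *v x)) + x \<bullet> (E *v x) < 0" .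
  qed
qed

lemma scaleR_mat_vec: "((c::real) *\<^sub>R (A::real^'n^'m)) *v x = c *\<^sub>R (A *v x)"
  by (simp add: vec_eq_iff matrix_vector_mult_def sum_distrib_left mult_ac)

theorem theorem4:
  fixes A12 :: "real^'n^'m" and A22 :: "real^'n^'n" and Q :: "real^'k^'n"
  assumes A12_nonneg: "\<forall>i j. A12 $ i $ j \<ge> 0"
    and A12_rank: "rank A12 = CARD('m)"
    and A22_offdiag: "\<forall>i j. i \<noteq> j \<longrightarrow> A22 $ i $ j \<ge> 0"
    and A22_diag: "\<forall>i. A22 $ i $ i \<le> 0"
    and A22_conn: "weakly_connected_graph A22"
    and A22_dom: "\<forall>i. (\<Sum>j\<in>UNIV - {i}. A22 $ i $ j + A22 $ j $ i) \<le> 2 * \<bar>A22 $ i $ i\<bar>"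
    and A22_strict: "\<exists>j. (\<Sum>i\<in>UNIV - {j}. A22 $ j $ i + A22 $ i $ j) < 2 * \<bar>A22 $ j $ j\<bar>"
    and Q_clust: "clustering_matrix Q"
    and Q_rank: "rank (A12 ** Q) = CARD('k)"
  shows "\<exists>\<psi>::real. \<forall>\<phi>>\<psi>. hurwitz (M_mat A12 A22 Q \<phi>)"
proof -
  have injAQ: "inj ((*v) (A12 ** Q))" using Q_rank full_rank_injective by blast
  have injQ: "inj ((*v) Q)"
  proof (rule injI)
    fix x y assume "Q *v x = Q *v y"
    then have "(A12 ** Q) *v x = (A12 ** Q) *v y" by (simp add: matrix_vector_mul_assoc[symmetric])
    then show "x = y" using injAQ by (meson injD)
  qed
  have injAt: "inj ((*v) (transpose A12))"
    using A12_rank rank_transpose[of A12] full_rank_injective[of "transpose A12"] by simp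
  define G where "G = transpose Q ** Q"
  define H where "H = A12 ** transpose A12"
  define Gi where "Gi = matrix_inv G"
  define Hi where "Hi = matrix_inv H"
  have invG: "invertible G" unfolding G_def by (rule gram_inv[OF injQ])
  have invH: "invertible H" unfolding H_def using gram_inv[OF injAt] by simp
  have symG: "transpose G = G" unfolding G_def by (simp add: matrix_transpose_mul)
  have symH: "transpose H = H" unfolding H_def by (simp add: matrix_transpose_mul)
  have symGi: "transpose Gi = Gi" unfolding Gi_def by (rule sym_inv[OF symG invG])
  have symHi: "transpose Hi = Hi" unfolding Hi_def by (rule sym_inv[OF symH invH])
  have GGi: "G ** Gi = mat 1" unfolding Gi_def by (rule inv_props(1)[OF invG])
  have HHi: "H ** Hi = mat 1" unfolding Hi_def by (rule inv_props(1)[OF invH])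
  define P where "P = transpose A12 ** Hi ** A12"
  define S where "S = transpose Q ** P ** Q"
  have symS: "transpose S = S"
    unfolding S_def P_def by (simp add: matrix_transpose_mul symHi matrix_mul_assoc)
  have Sform: "x \<bullet> (S *v x) = (A12 *v (Q *v x)) \<bullet> (Hi *v (A12 *v (Q *v x)))" for x
    unfolding S_def P_def
    by (simp only: matrix_vector_mul_assoc[symmetric] adj[of x "transpose Q"] transpose_transpose
        adj[of _ "transpose A12"])
  have posHi: "u \<bullet> (Hi *v u) > 0" if "u \<noteq> 0" for u
  proof -
    define w where "w = Hi *v u"
    have uw: "u = H *v w" unfolding w_def by (simp add: matrix_vector_mul_assoc HHi)
    have w0: "w \<noteq> 0" using that uw by auto
    have "u \<bullet> w = (transpose A12 *v w) \<bullet> (transpose A12 *v w)"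
      unfolding uw H_def by (simp only: matrix_vector_mul_assoc[symmetric] adj[of w A12] inner_commute)
    moreover have "transpose A12 *v w \<noteq> 0"
      using w0 injAt by (metis injD matrix_vector_mult_0_right)
    ultimately show ?thesis unfolding w_def by simp
  qed
  have posS: "x \<bullet> (S *v x) > 0" if "x \<noteq> 0" for x
  proof -
    have "A12 *v (Q *v x) \<noteq> 0"
      using that injAQ by (metis injD matrix_vector_mult_0_right matrix_vector_mul_assoc)
    then show ?thesis using Sform posHi by simp
  qed
  define C where "C = Gi ** transpose Q ** A22 ** (Q - P ** Q)"
  define N where "N = Gi ** transpose Q ** A22 ** Q ** Gi ** transpose Q ** P ** Q"
  have Mdec: "M_mat A12 A22 Q \<phi> *v x = C *v x + \<phi> *\<^sub>R (N *v x)" for \<phi> x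
    unfolding M_mat_def R_mat_def left_pinv_def right_pinv_def C_def N_def
      G_def[symmetric] H_def[symmetric] Gi_def[symmetric] Hi_def[symmetric] P_def
    by (simp add: matrix_vector_mul_assoc[symmetric] matrix_vector_mult_diff_rdistrib
        matrix_vector_mult_diff_distrib scaleR_mat_vec matrix_vector_mult_scaleR)
  have Nform: "x \<bullet> (S *v (N *v x)) = z \<bullet> (A22 *v z)" if "z = Q *v (Gi *v (S *v x))" for x z
  proof -
    have "N *v x = Gi *v (transpose Q *v (A22 *v (Q *v (Gi *v (S *v x)))))"
      unfolding N_def S_def by (simp add: matrix_vector_mul_assoc[symmetric])
    then have "x \<bullet> (S *v (N *v x)) = x \<bullet> (S *v (Gi *v (transpose Q *v (A22 *v z))))"
      using that by simp
    also have "\<dots> = z \<bullet> (A22 *v z)"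
      unfolding that
      by (simp only: adj[of x S] symS adj[of _ Gi] symGi adj[of _ "transpose Q"] transpose_transpose)
    finally show ?thesis .
  qed
  have negN: "x \<bullet> (S *v (N *v x)) < 0" if "x \<noteq> 0" for x
  proof -
    have "S *v x \<noteq> 0" using posS[OF that] by auto
    then have "Gi *v (S *v x) \<noteq> 0"
      by (metis GGi matrix_vector_mul_assoc matrix_vector_mul_lid matrix_vector_mult_0_right)
    then have "Q *v (Gi *v (S *v x)) \<noteq> 0"
      using injQ by (metis injD matrix_vector_mult_0_right)
    then show ?thesis
      using Nform quad_neg[OF A22_offdiag A22_diag A22_conn A22_dom A22_strict] by simp
  qed
  define F where "F = S ** N"
  define E where "E = S ** C"
  have negF: "x \<bullet> (F *v x) < 0" if "x \<noteq> 0" for x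
    using negN[OF that] by (simp add: F_def matrix_vector_mul_assoc[symmetric])
  obtain \<psi> where psi: "\<forall>\<phi>>\<psi>. \<forall>x. x \<noteq> 0 \<longrightarrow> \<phi> * (x \<bullet> (F *v x)) + x \<bullet> (E *v x) < 0"
    using quad_bound[OF negF, of E] by blast
  show ?thesis
  proof (intro exI allI impI)
    fix \<phi> assume "\<phi> > \<psi>"
    show "hurwitz (M_mat A12 A22 Q \<phi>)"
    proof (rule lyap_eig[OF symS posS])
      fix x :: "real^'k" assume "x \<noteq> 0"
      have "x \<bullet> (S *v (M_mat A12 A22 Q \<phi> *v x)) = \<phi> * (x \<bullet> (F *v x)) + x \<bullet> (E *v x)"
        by (simp add: Mdec F_def E_def matrix_vector_mul_assoc[symmetric] matrix_vector_right_distrib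
            matrix_vector_mult_scaleR inner_add_right)
      then show "x \<bullet> (S *v (M_mat A12 A22 Q \<phi> *v x)) < 0"
        using psi \<open>\<phi> > \<psi>\<close> \<open>x \<noteq> 0\<close> by simp
    qed
  qed
qed
end
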